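(* Let $A$ be a payoff Conway game. (1) Every winning strategy on $A$ plays only plays that are well-parenthesized for Player. (2) For every winning strategy $\sigma$ on $A$ and every winning strategy $\tau$ on $A^*\otimes\mathnormal{2}$, every play of the interaction $\sigma\Join\tau$ is well-parenthesized (for both Player and Opponent).
   Context: A Conway game $A=(V_A,E_A,\lambda_A)$ is a rooted directed graph with root $\star_A$ and polarity $\lambda_A:E_A\to\{-1,+1\}$ ($-1$ Opponent, $+1$ Player). Paths $s:x\twoheadrightarrow y$ are finite sequences of consecutive moves; $\epsilon_x$ is the empty path; $s;t$ concatenation; plays are paths from the root; alternating means consecutive moves have opposite polarities. A strategy on $A$ is a set of alternating even-length plays containing the empty play, whose nonempty plays start with Opponent, closed under even-length prefixes, and deterministic. A payoff Conway game has $\kappa_A=(\kappa_A^+,\kappa_A^-):\mathrm{Path}_A\to\mathbb{N}\times\mathbb{N}$ with: $\lambda_A(m)=-1\Rightarrow\kappa_A^+(m)=0$, $\lambda_A(m)=+1\Rightarrow\kappa_A^-(m)=0$; $\kappa_A(t)\le\kappa_A(s;t)$; $\kappa_A(s;t)\le\kappa_A(s)+\kappa_A(t)$; $\kappa_A(\epsilon_x)=(0,0)$. The dual $A^*$ reverses polarities and swaps $\kappa^+,\kappa^-$; the tensor $A\otimes B$ is the product graph with moves of either component, polarities inherited, and $\kappa_{A\otimes B}(s)=\kappa_A(s_{|A})+\kappa_B(s_{|B})$. A strategy plays a path $t:x\twoheadrightarrow y$ if some play $s:\star\twoheadrightarrow x$ in it has $s;t$ in it; it is winning if every path $s$ it plays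 satisfies $\kappa^+(s)=0\Rightarrow\kappa^-(s)=0$. A play $s$ is well-parenthesized for Player if every even-length path $t$ occurring in $s$ (as a segment) and ending with a Player move satisfies $\kappa_A^+(t)=0\Rightarrow\kappa_A^-(t)=0$; well-parenthesized for Opponent if every even-length path $t$ in $s$ ending with an Opponent move satisfies $\kappa_A^-(t)=0\Rightarrow\kappa_A^+(t)=0$; well-parenthesized if both. $\mathnormal{2}$ is the payoff game with graph $\bullet\xrightarrow{o}\bullet$: a single Opponent move $o$ with payoff $(0,0)$ (all its paths have payoff $(0,0)$). For $\sigma$ on $A$ and $\tau$ on $A^*\otimes\mathnormal{2}$, the interaction is $\sigma\Join\tau=\{\epsilon\}\cup\{s\cdot m\mid s\cdot m\in\sigma\text{ and } o\cdot s\in\tau\}$, where $s$ is a play and $m$ a move. *)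

theory Defs
  imports Main
begin

text \<open>A Conway game: a rooted directed multigraph (vertices of type 'v, moves of
type 'm with source and target), a polarity (-1 Opponent, +1 Player) on moves,
and a payoff function on paths.  Paths are represented by their list of moves;
the empty path is the empty list (its payoff is (0,0) in any case).\<close>

record ('v, 'm) game =
  verts :: "'v set"
  moves :: "'m set"
  src   :: "'m \<Rightarrow> 'v"
  tgt   :: "'m \<Rightarrow> 'v"
  root  :: "'v"
  pol   :: "'m \<Rightarrow> int"
  kappa :: "'m list \<Rightarrow> nat \<times> nat"

abbreviation kappa_plus :: "('v, 'm) game \<Rightarrow> 'm list \<Rightarrow> nat" where
  "kappa_plus A s \<equiv> fst (kappa A s)"

abbreviation kappa_minus :: "('v, 'm) game \<Rightarrow> 'm list \<Rightarrow> nat" where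
  "kappa_minus A s \<equiv> snd (kappa A s)"

definition le2 :: "nat \<times> nat \<Rightarrow> nat \<times> nat \<Rightarrow> bool" where
  "le2 p q \<longleftrightarrow> fst p \<le> fst q \<and> snd p \<le> snd q"

definition add2 :: "nat \<times> nat \<Rightarrow> nat \<times> nat \<Rightarrow> nat \<times> nat" where
  "add2 p q = (fst p + fst q, snd p + snd q)"

fun chain :: "('v, 'm) game \<Rightarrow> 'm list \<Rightarrow> bool" where
  "chain A [] = True"
| "chain A [m] = (m \<in> moves A)"
| "chain A (m # n # s) = (m \<in> moves A \<and> tgt A m = src A n \<and> chain A (n # s))"

definition is_path :: "('v, 'm) game \<Rightarrow> 'v \<Rightarrow> 'v \<Rightarrow> 'm list \<Rightarrow> bool" where
  "is_path A x y s \<longleftrightarrow> x \<in> verts A \<and> y \<in> verts A \<and> chain A s \<and>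
     (s = [] \<longrightarrow> x = y) \<and> (s \<noteq> [] \<longrightarrow> src A (hd s) = x \<and> tgt A (last s) = y)"

definition is_play :: "('v, 'm) game \<Rightarrow> 'm list \<Rightarrow> bool" where
  "is_play A s \<longleftrightarrow> (\<exists>y. is_path A (root A) y s)"

definition alternating :: "('v, 'm) game \<Rightarrow> 'm list \<Rightarrow> bool" where
  "alternating A s \<longleftrightarrow> (\<forall>i. Suc i < length s \<longrightarrow> pol A (s ! Suc i) = - pol A (s ! i))"

definition conway_game :: "('v, 'm) game \<Rightarrow> bool" where
  "conway_game A \<longleftrightarrow> root A \<in> verts A \<and>
     (\<forall>m\<in>moves A. src A m \<in> verts A \<and> tgt A m \<in> verts A \<and> pol A m \<in> {-1, 1})"

definition payoff_game :: "('v, 'm) game \<Rightarrow> bool" where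
  "payoff_game A \<longleftrightarrow> conway_game A \<and>
     (\<forall>m\<in>moves A. pol A m = -1 \<longrightarrow> kappa_plus A [m] = 0) \<and>
     (\<forall>m\<in>moves A. pol A m = 1 \<longrightarrow> kappa_minus A [m] = 0) \<and>
     (\<forall>x y z s t. is_path A x y s \<longrightarrow> is_path A y z t \<longrightarrow>
        le2 (kappa A t) (kappa A (s @ t))) \<and>
     (\<forall>x y z s t. is_path A x y s \<longrightarrow> is_path A y z t \<longrightarrow>
        le2 (kappa A (s @ t)) (add2 (kappa A s) (kappa A t))) \<and>
     kappa A [] = (0, 0)"

definition strategy :: "('v, 'm) game \<Rightarrow> 'm list set \<Rightarrow> bool" where
  "strategy A \<sigma> \<longleftrightarrow>
     [] \<in> \<sigma> \<and>
     (\<forall>s\<in>\<sigma>. is_play A s \<and> alternating A s \<and> even (length s)) \<and>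
     (\<forall>s\<in>\<sigma>. s \<noteq> [] \<longrightarrow> pol A (hd s) = -1) \<and>
     (\<forall>s\<in>\<sigma>. \<forall>k. even k \<longrightarrow> k \<le> length s \<longrightarrow> take k s \<in> \<sigma>) \<and>
     (\<forall>s m n n'. s @ [m, n] \<in> \<sigma> \<longrightarrow> s @ [m, n'] \<in> \<sigma> \<longrightarrow> n = n')"

definition plays_path :: "('v, 'm) game \<Rightarrow> 'm list set \<Rightarrow> 'm list \<Rightarrow> bool" where
  "plays_path A \<sigma> t \<longleftrightarrow> (\<exists>x y s. is_path A x y t \<and> is_path A (root A) x s \<and>
      s \<in> \<sigma> \<and> s @ t \<in> \<sigma>)"

definition winning :: "('v, 'm) game \<Rightarrow> 'm list set \<Rightarrow> bool" where
  "winning A \<sigma> \<longleftrightarrow> strategy A \<sigma> \<and>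
     (\<forall>t. plays_path A \<sigma> t \<longrightarrow> kappa_plus A t = 0 \<longrightarrow> kappa_minus A t = 0)"

definition wp_player :: "('v, 'm) game \<Rightarrow> 'm list \<Rightarrow> bool" where
  "wp_player A s \<longleftrightarrow> (\<forall>u t v x y. s = u @ t @ v \<longrightarrow> is_path A x y t \<longrightarrow>
      even (length t) \<longrightarrow> t \<noteq> [] \<longrightarrow> pol A (last t) = 1 \<longrightarrow>
      kappa_plus A t = 0 \<longrightarrow> kappa_minus A t = 0)"

definition wp_opponent :: "('v, 'm) game \<Rightarrow> 'm list \<Rightarrow> bool" where
  "wp_opponent A s \<longleftrightarrow> (\<forall>u t v x y. s = u @ t @ v \<longrightarrow> is_path A x y t \<longrightarrow>
      even (length t) \<longrightarrow> t \<noteq> [] \<longrightarrow> pol A (last t) = -1 \<longrightarrow>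
      kappa_minus A t = 0 \<longrightarrow> kappa_plus A t = 0)"

definition well_parenthesized :: "('v, 'm) game \<Rightarrow> 'm list \<Rightarrow> bool" where
  "well_parenthesized A s \<longleftrightarrow> wp_player A s \<and> wp_opponent A s"

definition dual :: "('v, 'm) game \<Rightarrow> ('v, 'm) game" where
  "dual A = A\<lparr> pol := (\<lambda>m. - pol A m),
              kappa := (\<lambda>s. (kappa_minus A s, kappa_plus A s)) \<rparr>"

fun projL :: "(('ma \<times> 'vb) + ('mb \<times> 'va)) list \<Rightarrow> 'ma list" where
  "projL [] = []"
| "projL (Inl (m, y) # s) = m # projL s"
| "projL (Inr _ # s) = projL s"

fun projR :: "(('ma \<times> 'vb) + ('mb \<times> 'va)) list \<Rightarrow> 'mb list" where
  "projR [] = []"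
| "projR (Inl _ # s) = projR s"
| "projR (Inr (n, x) # s) = n # projR s"

text \<open>Tensor product: product graph; an A-move \<open>m\<close> performed while B sits at
\<open>y\<close> is \<open>Inl (m, y)\<close>, a B-move \<open>n\<close> performed while A sits at \<open>x\<close> is \<open>Inr (n, x)\<close>.\<close>

definition tensor :: "('va, 'ma) game \<Rightarrow> ('vb, 'mb) game \<Rightarrow>
    ('va \<times> 'vb, ('ma \<times> 'vb) + ('mb \<times> 'va)) game" where
  "tensor A B = \<lparr>
     verts = verts A \<times> verts B,
     moves = {Inl (m, y) | m y. m \<in> moves A \<and> y \<in> verts B} \<union>
             {Inr (n, x) | n x. n \<in> moves B \<and> x \<in> verts A},
     src = (\<lambda>e. case e of Inl (m, y) \<Rightarrow> (src A m, y) | Inr (n, x) \<Rightarrow> (x, src B n)),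
     tgt = (\<lambda>e. case e of Inl (m, y) \<Rightarrow> (tgt A m, y) | Inr (n, x) \<Rightarrow> (x, tgt B n)),
     root = (root A, root B),
     pol = (\<lambda>e. case e of Inl (m, y) \<Rightarrow> pol A m | Inr (n, x) \<Rightarrow> pol B n),
     kappa = (\<lambda>s. add2 (kappa A (projL s)) (kappa B (projR s))) \<rparr>"

definition two :: "(bool, unit) game" where
  "two = \<lparr> verts = UNIV, moves = {()}, src = (\<lambda>_. False), tgt = (\<lambda>_. True),
           root = False, pol = (\<lambda>_. -1), kappa = (\<lambda>_. (0, 0)) \<rparr>"

text \<open>The play \<open>o \<cdot> s\<close> of \<open>A\<^sup>* \<otimes> 2\<close> for a play \<open>s\<close> of A: first the move \<open>o\<close>
of 2 (with A at its root), then the moves of \<open>s\<close> (with 2 at its final vertex).\<close>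

definition o_then :: "('v, 'm) game \<Rightarrow> 'm list \<Rightarrow> (('m \<times> bool) + (unit \<times> 'v)) list" where
  "o_then A s = Inr ((), root A) # map (\<lambda>m. Inl (m, True)) s"

definition interaction :: "('v, 'm) game \<Rightarrow> 'm list set \<Rightarrow>
    (('m \<times> bool) + (unit \<times> 'v)) list set \<Rightarrow> 'm list set" where
  "interaction A \<sigma> \<tau> = {[]} \<union>
     {s @ [m] | s m. is_play A s \<and> s @ [m] \<in> \<sigma> \<and> o_then A s \<in> \<tau>}"

end

theory Submission
  imports Defs
begin

lemma alt_pol:
  assumes "alternating A s" "s \<noteq> []" "pol A (hd s) = -1" "i < length s"
  shows "pol A (s ! i) = (if even i then -1 else 1)"
  using assms(4)
proof (induction i)
  case 0
  then show ?case using assms(2,3) by (simp add: hd_conv_nth)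
next
  case (Suc i)
  then have "pol A (s ! Suc i) = - pol A (s ! i)" using assms(1) unfolding alternating_def by blast
  then show ?case using Suc by auto
qed

lemma chain_append:
  "chain A (p @ q) \<Longrightarrow> chain A p \<and> chain A q \<and> (p \<noteq> [] \<longrightarrow> q \<noteq> [] \<longrightarrow> tgt A (last p) = src A (hd q))"
proof (induction p)
  case Nil
  then show ?case by simp
next
  case (Cons a p)
  show ?case
  proof (cases p)
    case Nil
    then show ?thesis using Cons.prems by (cases q) auto
  next
    case (Cons b p')
    then show ?thesis using Cons.prems Cons.IH by auto
  qed
qed

lemma wp_of_winning:
  assumes w: "winning A \<sigma>" and s: "s \<in> \<sigma>"
  shows "wp_player A s"
  unfolding wp_player_def
proof (intro allI impI)
  fix u t v x y
  assume st: "s = u @ t @ v" and tp: "is_path A x y t" and ev: "even (length t)"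
    and tne: "t \<noteq> []" and pl: "pol A (last t) = 1" and kp: "kappa_plus A t = 0"
  have str: "strategy A \<sigma>" using w unfolding winning_def by blast
  have alt: "alternating A s" and evs: "even (length s)" and ply: "is_play A s"
    using str s unfolding strategy_def by auto
  have sne: "s \<noteq> []" using st tne by simp
  have hd: "pol A (hd s) = -1" using str s sne unfolding strategy_def by auto
  define i where "i = length u + length t - 1"
  have il: "i < length s" using st tne unfolding i_def by (cases t) auto
  have "s ! i = last t" using st tne unfolding i_def
    by (cases t) (auto simp: last_conv_nth nth_append)
  then have "pol A (s ! i) = 1" using pl by simp
  with alt_pol[OF alt sne hd il] have "odd i" by (auto split: if_splits)
  then have eu: "even (length u)" using ev tne unfolding i_def by (cases t) auto
  have pre: "\<forall>k. even k \<longrightarrow> k \<le> length s \<longrightarrow> take k s \<in> \<sigma>"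
    using str s unfolding strategy_def by blast
  have u\<sigma>: "u \<in> \<sigma>" using pre[rule_format, of "length u"] eu st by simp
  have ut\<sigma>: "u @ t \<in> \<sigma>" using pre[rule_format, of "length u + length t"] eu ev st by simp
  obtain y0 where sp: "is_path A (root A) y0 s" using ply unfolding is_play_def by blast
  have ch: "chain A (u @ (t @ v))" using sp st unfolding is_path_def by simp
  have xv: "x \<in> verts A" using tp unfolding is_path_def by simp
  have hx: "src A (hd t) = x" using tp tne unfolding is_path_def by simp
  have upath: "is_path A (root A) x u"
  proof (cases "u = []")
    case True
    then have "src A (hd s) = root A" using sp sne unfolding is_path_def by simp
    then have "x = root A" using True st hx tne by simp
    then show ?thesis using True xv unfolding is_path_def by simp
  next
    case False
    have "chain A u" "tgt A (last u) = src A (hd (t @ v))"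
      using chain_append[OF ch] False tne by auto
    moreover have "src A (hd u) = root A" using sp sne st False unfolding is_path_def by simp
    moreover have "root A \<in> verts A" using sp unfolding is_path_def by simp
    ultimately show ?thesis using False xv hx tne unfolding is_path_def by simp
  qed
  have "plays_path A \<sigma> t" unfolding plays_path_def using tp upath u\<sigma> ut\<sigma> by blast
  then show "kappa_minus A t = 0" using w kp unfolding winning_def by blast
qed

lemma projL_map: "projL (map (\<lambda>m. Inl (m, b)) t) = t"
  by (induction t) auto

lemma projR_map: "projR (map (\<lambda>m. Inl (m, b)) t) = []"
  by (induction t) auto

lemma chain_map:
  "chain A t \<Longrightarrow> chain (tensor (dual A) two) (map (\<lambda>m. Inl (m, True)) t)"
  by (induction A t rule: chain.induct) (auto simp: tensor_def dual_def two_def)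

theorem mainTheorem4:
  fixes A :: "('v, 'm) game"
  assumes "payoff_game A"
  shows "(\<forall>\<sigma>. winning A \<sigma> \<longrightarrow> (\<forall>s\<in>\<sigma>. wp_player A s))
       \<and> (\<forall>\<sigma> \<tau>. winning A \<sigma> \<longrightarrow> winning (tensor (dual A) two) \<tau> \<longrightarrow>
            (\<forall>s\<in>interaction A \<sigma> \<tau>. well_parenthesized A s))"
proof (intro conjI allI impI ballI)
  fix \<sigma> s assume "winning A \<sigma>" "s \<in> \<sigma>"
  then show "wp_player A s" by (rule wp_of_winning)
next
  fix \<sigma> \<tau> s'
  assume w: "winning A \<sigma>" and w\<tau>: "winning (tensor (dual A) two) \<tau>"
    and s': "s' \<in> interaction A \<sigma> \<tau>"
  show "well_parenthesized A s'"
  proof (cases "s' = []")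
    case True
    then show ?thesis unfolding well_parenthesized_def wp_player_def wp_opponent_def by simp
  next
    case False
    then obtain s m where sm: "s' = s @ [m]" "s @ [m] \<in> \<sigma>" "o_then A s \<in> \<tau>"
      using s' unfolding interaction_def by blast
    have wpp: "wp_player A s'" using wp_of_winning[OF w] sm by simp
    let ?T = "tensor (dual A) two"
    let ?f = "\<lambda>m. Inl (m, True) :: ('m \<times> bool) + (unit \<times> 'v)"
    have wpT: "wp_player ?T (o_then A s)" using wp_of_winning[OF w\<tau> sm(3)] .
    have str: "strategy A \<sigma>" using w unfolding winning_def by blast
    have alt: "alternating A s'" and evs: "even (length s')"
      using str sm unfolding strategy_def by auto
    have hd: "pol A (hd s') = -1" using str sm unfolding strategy_def by auto
    have "pol A (s' ! length s) = (if even (length s) then -1 else 1)"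
      using alt_pol[OF alt False hd, of "length s"] sm by simp
    moreover have "odd (length s)" using sm evs by simp
    ultimately have pm: "pol A m = 1" using sm by simp
    have wpo: "wp_opponent A s'"
      unfolding wp_opponent_def
    proof (intro allI impI)
      fix u t v x y
      assume st: "s' = u @ t @ v" and tp: "is_path A x y t" and ev: "even (length t)"
        and tne: "t \<noteq> []" and pl: "pol A (last t) = -1" and km: "kappa_minus A t = 0"
      have vne: "v \<noteq> []"
      proof
        assume "v = []"
        then have "last (s @ [m]) = last (u @ t)" using st sm by simp
        then have "last t = m" using tne by simp
        then show False using pl pm by simp
      qed
      then have "s = u @ t @ butlast v" using st sm
        by (metis append_assoc append_butlast_last_id butlast_snoc)
      then have oe: "o_then A s = (Inr ((), root A) # map ?f u) @ map ?f t @ map ?f (butlast v)"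
        unfolding o_then_def by simp
      have kT: "kappa ?T (map ?f t) = (kappa_minus A t, kappa_plus A t)"
        by (simp add: tensor_def projL_map projR_map dual_def two_def add2_def)
      have tpT: "is_path ?T (x, True) (y, True) (map ?f t)"
        using tp tne chain_map[of A t] unfolding is_path_def
        by (auto simp: tensor_def dual_def two_def hd_map last_map)
      have H: "\<And>u t v x y. o_then A s = u @ t @ v \<Longrightarrow> is_path ?T x y t \<Longrightarrow>
          even (length t) \<Longrightarrow> t \<noteq> [] \<Longrightarrow> pol ?T (last t) = 1 \<Longrightarrow>
          kappa_plus ?T t = 0 \<Longrightarrow> kappa_minus ?T t = 0"
        using wpT unfolding wp_player_def by blast
      have pT: "pol ?T (last (map ?f t)) = 1"
        using pl tne by (simp add: last_map tensor_def dual_def)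
      have "kappa_plus ?T (map ?f t) = 0 \<longrightarrow> kappa_minus ?T (map ?f t) = 0"
        using H[OF oe tpT _ _ pT] ev tne by simp
      then show "kappa_plus A t = 0" using kT km by simp
    qed
    show ?thesis using wpp wpo unfolding well_parenthesized_def by simp
  qed
qed

end
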